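(* Let $\mathbf{H}_{\mathrm{SC}}$, $L_2$, $d$, the MD mapping $M$ and the matrix $\mathbf{H}^{\mathrm{MD}}_{\mathrm{SC}}$ be as in the context. Let $e_1,e_2,\dots,e_k$ be the edges, listed in traversal order, of a cycle of length $k$ in the Tanner graph of $\mathbf{H}_{\mathrm{SC}}$, labeled so that $e_u$ and $e_{u+1}$ share a check node (row) when $u$ is odd and share a variable node (column) when $u$ is even, where indices are taken cyclically ($e_{k+1}=e_1$). Define $$\Delta=\Big(-\sum_{u=1}^{k}(-1)^u M(e_u)\Big) \bmod L_2\in\{0,\dots,L_2-1\},\qquad \tau=\gcd(L_2,\Delta),$$ with the convention $\gcd(L_2,0)=L_2$. Then the subgraph of the Tanner graph of $\mathbf{H}^{\mathrm{MD}}_{\mathrm{SC}}$ formed by the $L_2k$ lifted edges $e_u^{(a)}$, $1\le u\le k$, $a\in\mathbb{Z}_{L_2}$, together with their endpoints, is a vertex-disjoint union of exactly $\tau$ cycles, each of length $L_2k/\tau$.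
   Context: $\mathbf{H}_{\mathrm{SC}}$ is a binary matrix partitioned into $z\times z$ blocks called circulants; each block is either the zero matrix or a cyclic shift of the $z\times z$ identity matrix (a nonzero circulant). Its Tanner graph has one variable node per column, one check node per row, and an edge $(r,c)$ for each entry $\mathbf{H}_{\mathrm{SC}}(r,c)=1$; each edge lies in exactly one nonzero circulant. Fix integers $1\le d\le L_2$. An MD mapping $M$ assigns to each nonzero circulant an integer in $\{0,1,\dots,d-1\}$; for an edge $e$ write $M(e)$ for the value of $M$ on the circulant containing $e$. (Equivalently, $\mathbf{H}_{\mathrm{SC}}=\mathbf{H}'_{\mathrm{SC}}+\sum_{t=1}^{d-1}\mathbf{A}_t$, where $\mathbf{A}_t$ keeps exactly the circulants with $M=t$ and $\mathbf{H}'_{\mathrm{SC}}$ those with $M=0$.) The MD-SC matrix $\mathbf{H}^{\mathrm{MD}}_{\mathrm{SC}}$ is the $L_2\times L_2$ block matrix whose block (segment) $\mathbf{S}_{a,b}$, $a,b\in\mathbb{Z}_{L_2}$, equals $\mathbf{H}'_{\mathrm{SC}}$ if $a=b$, equals $\mathbf{A}_t$ if $a-b\equiv t \pmod{L_2}$ with $1\le t\le d-1$, and is zero otherwise. Thus its rows are indexed by pairs $(a,r)$ and columns by pairs $(b,c)$, and the entry at $((a,r),(b,c))$ is $1$ iff $\mathbf{H}_{\mathrm{SC}}(r,c)=1$ and $a-b\equiv M((r,c))\pmod{L_2}$. For an edge $e=(r,c)$ of $\mathbf{H}_{\mathrm{SC}}$ and $a\in\mathbb{Z}_{L_2}$, its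 lifted edge $e^{(a)}$ is the edge of the Tanner graph of $\mathbf{H}^{\mathrm{MD}}_{\mathrm{SC}}$ joining variable node $(a,c)$ and check node $((a+M(e))\bmod L_2, r)$. A cycle of length $k$ in a Tanner graph is a closed path with $k$ distinct edges and no repeated vertices. *)

theory Defs
  imports Main
begin

text \<open>The binary matrix H_SC is a function on (row, column) indices (True = entry 1),
 of size (nr*z) x (nc*z), partitioned into z x z circulant blocks.\<close>

definition circulant_structured :: "(nat \<Rightarrow> nat \<Rightarrow> bool) \<Rightarrow> nat \<Rightarrow> nat \<Rightarrow> nat \<Rightarrow> bool" where
  "circulant_structured H nr nc z \<longleftrightarrow>
     z \<ge> 1 \<and>
     (\<forall>r c. H r c \<longrightarrow> r < nr * z \<and> c < nc * z) \<and>
     (\<forall>i<nr. \<forall>j<nc.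
        (\<forall>p<z. \<forall>q<z. \<not> H (i*z+p) (j*z+q)) \<or>
        (\<exists>s<z. \<forall>p<z. \<forall>q<z. H (i*z+p) (j*z+q) \<longleftrightarrow> q = (p + s) mod z))"

definition nonzero_circulant :: "(nat \<Rightarrow> nat \<Rightarrow> bool) \<Rightarrow> nat \<Rightarrow> nat \<Rightarrow> nat \<Rightarrow> bool" where
  "nonzero_circulant H z i j \<longleftrightarrow> (\<exists>p<z. \<exists>q<z. H (i*z+p) (j*z+q))"

definition md_mapping :: "(nat \<Rightarrow> nat \<Rightarrow> bool) \<Rightarrow> nat \<Rightarrow> nat \<Rightarrow> nat \<Rightarrow> nat \<Rightarrow> (nat \<Rightarrow> nat \<Rightarrow> nat) \<Rightarrow> bool" where
  "md_mapping H nr nc z d M \<longleftrightarrow>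
     (\<forall>i<nr. \<forall>j<nc. nonzero_circulant H z i j \<longrightarrow> M i j < d)"

definition Medge :: "nat \<Rightarrow> (nat \<Rightarrow> nat \<Rightarrow> nat) \<Rightarrow> nat \<times> nat \<Rightarrow> nat" where
  "Medge z M e = M (fst e div z) (snd e div z)"

definition md_matrix :: "(nat \<Rightarrow> nat \<Rightarrow> bool) \<Rightarrow> nat \<Rightarrow> (nat \<Rightarrow> nat \<Rightarrow> nat) \<Rightarrow> nat
     \<Rightarrow> nat \<times> nat \<Rightarrow> nat \<times> nat \<Rightarrow> bool" where
  "md_matrix H z M L2 ar bc \<longleftrightarrow>
     (case ar of (a, r) \<Rightarrow> case bc of (b, c) \<Rightarrow>
        a < L2 \<and> b < L2 \<and> H r c \<and>
        (int a - int b) mod int L2 = int (Medge z M (r, c)) mod int L2)"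

text \<open>Edges of the Tanner graph of a matrix: pairs (check node = row, variable node = column).\<close>
definition tanner_edges :: "('r \<Rightarrow> 'c \<Rightarrow> bool) \<Rightarrow> ('r \<times> 'c) set" where
  "tanner_edges A = {(r, c). A r c}"

definition endpoints :: "'r \<times> 'c \<Rightarrow> ('r + 'c) set" where
  "endpoints e = {Inl (fst e), Inr (snd e)}"

definition is_cycle :: "('r \<times> 'c) set \<Rightarrow> ('r \<times> 'c) list \<Rightarrow> bool" where
  "is_cycle E es \<longleftrightarrow> length es > 0 \<and> distinct es \<and> set es \<subseteq> E \<and>
     (\<exists>vs. length vs = length es \<and> distinct vs \<and>
        (\<forall>i<length es. endpoints (es ! i) = {vs ! i, vs ! ((i + 1) mod length es)}))"

definition lift_edge :: "nat \<Rightarrow> (nat \<Rightarrow> nat \<Rightarrow> nat) \<Rightarrow> nat \<Rightarrow> nat \<times> nat \<Rightarrow> nat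
     \<Rightarrow> (nat \<times> nat) \<times> (nat \<times> nat)" where
  "lift_edge z M L2 e a = (((a + Medge z M e) mod L2, fst e), (a, snd e))"

end

theory Submission imports Defs begin

lemma endpoints_inj: "endpoints e = endpoints e' \<Longrightarrow> e = e'"
  by (cases e; cases e') (auto simp: endpoints_def doubleton_eq_iff)

locale LC =
  fixes es :: "(nat \<times> nat) list" and z :: nat and M :: "nat \<Rightarrow> nat \<Rightarrow> nat" and L :: nat
    and Ed :: "(nat \<times> nat) set"
  assumes L1: "1 \<le> L"
    and cyc: "is_cycle Ed es"
    and par: "\<forall>i<length es. if even i then fst (es ! i) = fst (es ! ((i + 1) mod length es))
                                   else snd (es ! i) = snd (es ! ((i + 1) mod length es))"
begin

abbreviation "k \<equiv> length es"

lemma kpos: "0 < k" using cyc by (simp add: is_cycle_def)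
lemma dist: "distinct es" using cyc by (simp add: is_cycle_def)

lemma vs_ex: obtains vs where "length vs = k" "distinct vs"
  "\<And>i. i < k \<Longrightarrow> endpoints (es ! i) = {vs ! i, vs ! ((i + 1) mod k)}"
proof -
  from cyc obtain vs where "length vs = k \<and> distinct vs \<and>
     (\<forall>i<k. endpoints (es ! i) = {vs ! i, vs ! ((i + 1) mod k)})"
    unfolding is_cycle_def by blast
  then show ?thesis using that by auto
qed

lemma k3: "3 \<le> k"
proof -
  obtain vs where vs: "length vs = k" "distinct vs"
    "\<And>i. i < k \<Longrightarrow> endpoints (es ! i) = {vs ! i, vs ! ((i + 1) mod k)}" using vs_ex by metis
  have "k \<noteq> 1"
  proof
    assume "k = 1"
    then have "endpoints (es ! 0) = {vs ! 0}" using vs(3)[of 0] by simp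
    then show False by (auto simp: endpoints_def) (metis sum.distinct(1))
  qed
  moreover have "k \<noteq> 2"
  proof
    assume k2: "k = 2"
    then have "endpoints (es ! 0) = endpoints (es ! 1)" using vs(3)[of 0] vs(3)[of 1] by auto
    then have "es ! 0 = es ! 1" by (rule endpoints_inj)
    with dist k2 show False by (simp add: nth_eq_iff_index_eq)
  qed
  ultimately show ?thesis using kpos by linarith
qed

lemma par_even: "i < k \<Longrightarrow> even i \<Longrightarrow> fst (es ! i) = fst (es ! ((i + 1) mod k))"
  using par by auto
lemma par_odd: "i < k \<Longrightarrow> odd i \<Longrightarrow> snd (es ! i) = snd (es ! ((i + 1) mod k))"
  using par by auto

lemma struct: "even k \<and> (\<forall>i<k. \<forall>i'<k. odd i \<longrightarrow> odd i' \<longrightarrow> fst (es ! i) = fst (es ! i') \<longrightarrow> i = i')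
   \<and> (\<forall>i<k. \<forall>i'<k. even i \<longrightarrow> even i' \<longrightarrow> snd (es ! i) = snd (es ! i') \<longrightarrow> i = i')"
proof -
  obtain vs where vs: "length vs = k" "distinct vs"
    "\<And>i. i < k \<Longrightarrow> endpoints (es ! i) = {vs ! i, vs ! ((i + 1) mod k)}" using vs_ex by metis
  have k3: "3 \<le> k" by (rule k3)
  have neq: "i \<noteq> (i + 2) mod k" if "i < k" for i
  proof (cases "i + 2 < k")
    case True then show ?thesis by simp
  next
    case False
    then have "(i + 2) mod k = i + 2 - k" using that k3
      by (simp add: le_mod_geq)
    then show ?thesis using k3 that False by simp
  qed
  have i2: "((i + 1) mod k + 1) mod k = (i + 2) mod k" for i
    by (simp add: mod_Suc_eq)
  have cl_even: "vs ! ((i + 1) mod k) = Inl (fst (es ! i))" if "i < k" "even i" for i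
  proof (rule ccontr)
    assume ne: "vs ! ((i + 1) mod k) \<noteq> Inl (fst (es ! i))"
    have a: "Inl (fst (es ! i)) \<in> {vs ! i, vs ! ((i + 1) mod k)}"
      using vs(3)[OF that(1)] unfolding endpoints_def by (metis insertI1 insertI2 singletonI)
    have "Inl (fst (es ! ((i + 1) mod k))) \<in> {vs ! ((i + 1) mod k), vs ! (((i + 1) mod k + 1) mod k)}"
      using vs(3)[of "(i + 1) mod k"] kpos unfolding endpoints_def by (metis insertI1 insertI2 singletonI mod_less_divisor)
    then have b: "Inl (fst (es ! i)) \<in> {vs ! ((i + 1) mod k), vs ! ((i + 2) mod k)}"
      using par_even[OF that] i2 by simp
    from a b ne have "vs ! i = vs ! ((i + 2) mod k)" by auto
    then show False using vs(1,2) neq[OF that(1)] that(1) kpos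
      by (simp add: nth_eq_iff_index_eq)
  qed
  have cl_odd: "vs ! ((i + 1) mod k) = Inr (snd (es ! i))" if "i < k" "odd i" for i
  proof (rule ccontr)
    assume ne: "vs ! ((i + 1) mod k) \<noteq> Inr (snd (es ! i))"
    have a: "Inr (snd (es ! i)) \<in> {vs ! i, vs ! ((i + 1) mod k)}"
      using vs(3)[OF that(1)] unfolding endpoints_def by (metis insertI1 insertI2 singletonI)
    have "Inr (snd (es ! ((i + 1) mod k))) \<in> {vs ! ((i + 1) mod k), vs ! (((i + 1) mod k + 1) mod k)}"
      using vs(3)[of "(i + 1) mod k"] kpos unfolding endpoints_def by (metis insertI1 insertI2 singletonI mod_less_divisor)
    then have b: "Inr (snd (es ! i)) \<in> {vs ! ((i + 1) mod k), vs ! ((i + 2) mod k)}"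
      using par_odd[OF that] i2 by simp
    from a b ne have "vs ! i = vs ! ((i + 2) mod k)" by auto
    then show False using vs(1,2) neq[OF that(1)] that(1) kpos
      by (simp add: nth_eq_iff_index_eq)
  qed
  have ke: "even k"
  proof (rule ccontr)
    assume "odd k"
    then have "vs ! 0 = Inl (fst (es ! (k - 1)))" using cl_even[of "k - 1"] kpos by simp
    moreover have "vs ! 1 = Inl (fst (es ! 0))" using cl_even[of 0] k3 kpos by simp
    moreover have "endpoints (es ! 0) = {vs ! 0, vs ! 1}" using vs(3)[of 0] k3 kpos by simp
    ultimately show False by (auto simp: endpoints_def)
  qed
  have form: "vs ! i = (if odd i then Inl (fst (es ! i)) else Inr (snd (es ! i)))" if "i < k" for i
  proof (cases "odd i")
    case True
    then have "vs ! ((i - 1 + 1) mod k) = Inl (fst (es ! (i - 1)))" using cl_even[of "i - 1"] that by simp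
    moreover have "fst (es ! (i - 1)) = fst (es ! ((i - 1 + 1) mod k))" using par_even[of "i - 1"] that True by simp
    ultimately show ?thesis using True that by simp
  next
    case False
    show ?thesis
    proof (cases "i = 0")
      case True
      have "vs ! ((k - 1 + 1) mod k) = Inr (snd (es ! (k - 1)))" using cl_odd[of "k - 1"] kpos ke by simp
      moreover have "snd (es ! (k - 1)) = snd (es ! ((k - 1 + 1) mod k))" using par_odd[of "k - 1"] kpos ke by simp
      ultimately show ?thesis using True kpos by simp
    next
      case i0: False
      then have "vs ! ((i - 1 + 1) mod k) = Inr (snd (es ! (i - 1)))" using cl_odd[of "i - 1"] that False by simp
      moreover have "snd (es ! (i - 1)) = snd (es ! ((i - 1 + 1) mod k))" using par_odd[of "i - 1"] that False i0 by simp
      ultimately show ?thesis using False i0 that by simp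
    qed
  qed
  show ?thesis
  proof (intro conjI ke allI impI)
    fix i i' assume "i < k" "i' < k" "odd i" "odd i'" "fst (es ! i) = fst (es ! i')"
    then have "vs ! i = vs ! i'" using form by simp
    then show "i = i'" using vs(1,2) \<open>i < k\<close> \<open>i' < k\<close> by (simp add: nth_eq_iff_index_eq)
  next
    fix i i' assume "i < k" "i' < k" "even i" "even i'" "snd (es ! i) = snd (es ! i')"
    then have "vs ! i = vs ! i'" using form by simp
    then show "i = i'" using vs(1,2) \<open>i < k\<close> \<open>i' < k\<close> by (simp add: nth_eq_iff_index_eq)
  qed
qed

lemma ke: "even k" using struct by blast

definition "eE j = es ! (j mod k)"
definition "mm j = int (Medge z M (eE j))"
definition "GG n = (\<Sum>t<n. (-1) ^ t * mm t)"
definition "PP = GG k"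
definition "XX j = GG j - (if odd j then mm j else 0)"
definition "gg = gcd (int L) PP"
definition "QQ = L div nat gg"
definition "nn = QQ * k"
definition "bb a j = nat ((int a + XX j) mod int L)"

lemma eE_add: "eE (j + q * k) = eE j" by (simp add: eE_def)
lemma mm_add: "mm (j + q * k) = mm j" by (simp add: mm_def eE_add)
lemma mm_addk: "mm (j + k) = mm j" using mm_add[of j 1] by simp
lemma even_mod: "even (j mod k) = even j"
  using ke by (simp add: even_iff_mod_2_eq_zero mod_mod_cancel)

lemma GG_addk: "GG (n + k) = GG n + PP"
proof (induction n)
  case 0 then show ?case by (simp add: PP_def GG_def)
next
  case (Suc n)
  have "GG (Suc n + k) = GG (n + k) + (-1) ^ (n + k) * mm (n + k)" by (simp add: GG_def)
  also have "\<dots> = GG n + PP + (-1) ^ n * mm n" using Suc ke by (simp add: mm_addk power_add)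
  also have "\<dots> = GG (Suc n) + PP" by (simp add: GG_def)
  finally show ?case .
qed

lemma GG_addq: "GG (n + q * k) = GG n + int q * PP"
proof (induction q)
  case 0 then show ?case by simp
next
  case (Suc q)
  have "GG (n + Suc q * k) = GG (n + q * k + k)" by (simp add: algebra_simps)
  also have "\<dots> = GG n + int q * PP + PP" using Suc by (simp add: GG_addk)
  finally show ?case by (simp add: algebra_simps)
qed

lemma XX_addq: "XX (j + q * k) = XX j + int q * PP"
  using ke by (simp add: XX_def GG_addq mm_add)

lemma XX_split: "XX j = XX (j mod k) + int (j div k) * PP"
  using XX_addq[of "j mod k" "j div k"] by simp

lemma R1: "even j \<Longrightarrow> XX j + mm j = XX (Suc j) + mm (Suc j)"
  by (simp add: XX_def GG_def)

lemma R2: "odd j \<Longrightarrow> XX (Suc j) = XX j"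
  by (simp add: XX_def GG_def)

lemma par_E_even: "even j \<Longrightarrow> fst (eE j) = fst (eE (Suc j))"
  using par_even[of "j mod k"] kpos even_mod[of j] by (simp add: eE_def mod_Suc_eq)

lemma par_E_odd: "odd j \<Longrightarrow> snd (eE j) = snd (eE (Suc j))"
  using par_odd[of "j mod k"] kpos even_mod[of j] by (simp add: eE_def mod_Suc_eq)

lemma gg_pos: "gg > 0" using L1 by (simp add: gg_def)
lemma gg_dvdL: "gg dvd int L" by (simp add: gg_def)
lemma gg_dvdP: "gg dvd PP" by (simp add: gg_def)
lemma QQ_gg: "int QQ * gg = int L"
proof -
  obtain c where c: "int L = gg * c" using gg_dvdL by blast
  have "c \<ge> 0" using c gg_pos L1
    by (metis le0 of_nat_0_le_iff zero_le_mult_iff linorder_not_le less_imp_le)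
  then have "L div nat gg = nat c" using c gg_pos
    by (metis nat_int nat_mult_distrib nonzero_mult_div_cancel_left less_imp_le nat_0_iff not_le mult.commute zero_less_iff_neq_zero)
  then show ?thesis using c gg_pos \<open>c \<ge> 0\<close> by (simp add: QQ_def)
qed
lemma QQ_pos: "QQ > 0" using QQ_gg L1 gg_pos
  by (metis mult_eq_0_iff of_nat_0 of_nat_le_0_iff le_numeral_extra(2) of_nat_1 gr0I not_one_le_zero)

lemma small_dvd: fixes x d :: int assumes "d dvd x" "\<bar>x\<bar> < d" shows "x = 0"
  using dvd_imp_le_int[OF _ assms(1)] assms(2) by fastforce

lemma coprime_Q: "coprime (int QQ) (PP div gg)"
proof -
  have "coprime (int L div gcd (int L) PP) (PP div gcd (int L) PP)"
    by (rule div_gcd_coprime) (use L1 in simp)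
  moreover have "int L div gg = int QQ" using QQ_gg gg_pos
    by (metis nonzero_mult_div_cancel_right less_irrefl)
  ultimately show ?thesis by (simp add: gg_def)
qed

lemma same:
  assumes "a < nat gg" "a' < nat gg" "j < nn" "j' < nn" "j mod k = j' mod k"
    and "int L dvd ((int a + XX j) - (int a' + XX j'))"
  shows "a = a' \<and> j = j'"
proof -
  define q where "q = j div k"
  define q' where "q' = j' div k"
  have qQ: "q < QQ" "q' < QQ" using assms(3,4) by (auto simp: q_def q'_def nn_def less_mult_imp_div_less)
  have d: "(int a + XX j) - (int a' + XX j') = (int a - int a') + (int q - int q') * PP"
    using XX_split[of j] XX_split[of j'] assms(5) by (simp add: q_def q'_def algebra_simps)
  have "gg dvd (int a - int a') + (int q - int q') * PP"
    using assms(6) d gg_dvdL by (metis dvd_trans)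
  moreover have "gg dvd (int q - int q') * PP" using gg_dvdP by simp
  ultimately have "gg dvd (int a - int a')" using dvd_add_left_iff by blast
  moreover have "\<bar>int a - int a'\<bar> < gg" using assms(1,2) gg_pos by linarith
  ultimately have aa: "a = a'" using small_dvd by fastforce
  obtain P' where P': "PP = P' * gg" using gg_dvdP by (metis dvd_def mult.commute)
  have "int L dvd (int q - int q') * PP" using assms(6) d aa by simp
  then have "int QQ * gg dvd ((int q - int q') * P') * gg" using QQ_gg P' by (simp add: algebra_simps)
  then have "int QQ dvd (int q - int q') * P'" using gg_pos by simp
  moreover have "P' = PP div gg" using P' gg_pos by simp
  ultimately have "int QQ dvd (int q - int q')" using coprime_Q coprime_dvd_mult_left_iff by blast
  moreover have "\<bar>int q - int q'\<bar> < int QQ" using qQ by linarith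
  ultimately have "q = q'" using small_dvd by fastforce
  then have "j = j'" using assms(5) by (metis q_def q'_def div_mult_mod_eq)
  with aa show ?thesis by simp
qed

lemma surj:
  assumes "i < k" "x < L"
  shows "\<exists>a < nat gg. \<exists>j < nn. j mod k = i \<and> bb a j = x"
proof -
  define y where "y = (int x - XX i) mod int L"
  define a0 where "a0 = y mod gg"
  obtain u where u: "y - a0 = gg * u" unfolding a0_def
    by (metis dvd_def mod_mod_trivial mod_0_imp_dvd mod_diff_left_eq diff_self mod_self)
  obtain s t where st: "s * int L + t * PP = gg" using bezout_int[of "int L" PP] by (auto simp: gg_def)
  define q0 where "q0 = t * u"
  define r where "r = q0 div int QQ"
  define q where "q = q0 mod int QQ"
  have q0: "q0 = q + int QQ * r" by (simp add: q_def r_def)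
  have qge: "0 \<le> q" "q < int QQ" using QQ_pos by (auto simp: q_def)
  obtain P' where P': "PP = P' * gg" using gg_dvdP by (metis dvd_def mult.commute)
  obtain c where c: "y = int x - XX i + int L * c" unfolding y_def
    by (metis mod_div_mult_eq mult.commute add.commute diff_add_cancel mod_eq_dvd_iff dvd_def
        mod_mod_trivial)
  define j where "j = i + nat q * k"
  have a0r: "0 \<le> a0" "a0 < gg" using gg_pos by (auto simp: a0_def)
  have Xj: "XX j = XX i + q * PP" using XX_addq[of i "nat q"] qge by (simp add: j_def)
  have "int (nat a0) + XX j - int x = a0 + XX i + q * PP - int x" using a0r Xj by simp
  also have "\<dots> = a0 + XX i + (q0 - int QQ * r) * PP - int x" using q0 by simp
  also have "\<dots> = a0 + XX i + u * (t * PP) - r * (int QQ * gg) * P' - int x"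
    using P' by (simp add: q0_def algebra_simps)
  also have "\<dots> = a0 + XX i + u * (gg - s * int L) - r * int L * P' - int x"
  proof -
    have e: "t * PP = gg - s * int L" using st by linarith
    show ?thesis unfolding e using QQ_gg by (simp add: algebra_simps)
  qed
  also have "\<dots> = int L * (c - u * s - r * P')"
    using u c by (simp add: algebra_simps)
  finally have dv: "int L dvd int (nat a0) + XX j - int x" by simp
  have "(int (nat a0) + XX j) mod int L = int x mod int L"
    using dv by (simp add: mod_eq_dvd_iff)
  then have "bb (nat a0) j = x" using assms(2) by (simp add: bb_def)
  moreover have "nat a0 < nat gg" using a0r by simp
  moreover have "j mod k = i" using assms(1) by (simp add: j_def)
  moreover have "j < nn"
  proof -
    have "nat q + 1 \<le> QQ" using qge by linarith
    then have "(nat q + 1) * k \<le> QQ * k" by (rule mult_right_mono) simp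
    then show ?thesis using assms(1) by (simp add: j_def nn_def algebra_simps)
  qed
  ultimately show ?thesis by blast
qed

definition "ww a j = (if odd j then Inl ((bb a j + Medge z M (eE j)) mod L, fst (eE j))
                      else Inr (bb a j, snd (eE j)))"
definition "CC a = map (\<lambda>j. lift_edge z M L (eE j) (bb a j)) [0..<nn]"
definition "Flift = {lift_edge z M L e x | e x. e \<in> set es \<and> x < L}"

lemma bb_lt: "bb a j < L" using L1 by (simp add: bb_def nat_less_iff)

lemma int_bb: "int (bb a j) = (int a + XX j) mod int L" using L1 by (simp add: bb_def)

lemma int_bbm: "int ((bb a j + Medge z M (eE j)) mod L) = (int a + XX j + mm j) mod int L"
proof -
  have "int ((bb a j + Medge z M (eE j)) mod L) = (int (bb a j) + mm j) mod int L"
    by (simp add: mm_def of_nat_mod)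
  also have "\<dots> = (int a + XX j + mm j) mod int L" by (simp add: int_bb mod_add_left_eq)
  finally show ?thesis .
qed

lemma nn_pos: "0 < nn" using QQ_pos kpos by (simp add: nn_def)
lemma even_nn: "even nn" using ke by (simp add: nn_def)

lemma bb_per: "bb a (j + nn) = bb a j"
proof -
  obtain P' where P': "PP = P' * gg" using gg_dvdP by (metis dvd_def mult.commute)
  have "XX (j + nn) = XX j + int L * P'"
    using XX_addq[of j QQ] P' QQ_gg by (simp add: nn_def algebra_simps)
  then have "(int a + XX (j + nn)) mod int L = (int a + XX j) mod int L"
    by (simp add: mod_eq_dvd_iff)
  then show ?thesis by (simp add: bb_def)
qed

lemma eE_per: "eE (j + nn) = eE j" using eE_add[of j QQ] by (simp add: nn_def)

lemma ww_per: "ww a (j + nn) = ww a j"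
  using even_nn by (simp add: ww_def bb_per eE_per)

lemma endpoints_lift: "endpoints (lift_edge z M L e x) = {Inl ((x + Medge z M e) mod L, fst e), Inr (x, snd e)}"
  by (simp add: endpoints_def lift_edge_def)

lemma ww_step: "endpoints (lift_edge z M L (eE j) (bb a j)) = {ww a j, ww a (Suc j)}"
proof (cases "odd j")
  case True
  have "bb a (Suc j) = bb a j" using R2[OF True] by (simp add: bb_def)
  then show ?thesis using True par_E_odd[OF True] by (simp add: endpoints_lift ww_def)
next
  case False
  have "int ((bb a (Suc j) + Medge z M (eE (Suc j))) mod L) = int ((bb a j + Medge z M (eE j)) mod L)"
  proof -
    have "int a + XX (Suc j) + mm (Suc j) = int a + XX j + mm j" using R1[of j] False by simp
    then show ?thesis by (simp only: int_bbm)
  qed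
  then have "(bb a (Suc j) + Medge z M (eE (Suc j))) mod L = (bb a j + Medge z M (eE j)) mod L"
    by (simp only: of_nat_eq_iff)
  then show ?thesis using False par_E_even[of j] by (auto simp: endpoints_lift ww_def)
qed

lemma mod_k_odd: "odd j \<Longrightarrow> odd (j mod k)" using even_mod by simp

lemma ww_inj:
  assumes "a < nat gg" "a' < nat gg" "j < nn" "j' < nn" "ww a j = ww a' j'"
  shows "a = a' \<and> j = j'"
proof (cases "odd j")
  case True
  have o': "odd j'" using assms(5) True by (auto simp: ww_def split: if_splits)
  have f: "fst (eE j) = fst (eE j')" using assms(5) True o' by (simp add: ww_def)
  have jk: "j mod k = j' mod k"
    using struct f True o' kpos even_mod[of j] even_mod[of j'] by (simp add: eE_def)
  then have ee: "eE j = eE j'" by (simp add: eE_def)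
  have "(bb a j + Medge z M (eE j)) mod L = (bb a' j' + Medge z M (eE j')) mod L"
    using assms(5) True o' by (simp add: ww_def)
  then have "(int a + XX j + mm j) mod int L = (int a' + XX j' + mm j') mod int L"
    by (metis int_bbm)
  moreover have "mm j = mm j'" using ee by (simp add: mm_def)
  ultimately have "int L dvd ((int a + XX j) - (int a' + XX j'))"
    by (simp add: mod_eq_dvd_iff)
  then show ?thesis using same assms jk by blast
next
  case False
  have o': "even j'" using assms(5) False by (auto simp: ww_def split: if_splits)
  have f: "snd (eE j) = snd (eE j')" using assms(5) False o' by (simp add: ww_def)
  have jk: "j mod k = j' mod k"
    using struct f False o' kpos even_mod[of j] even_mod[of j'] by (simp add: eE_def)
  have "bb a j = bb a' j'" using assms(5) False o' by (simp add: ww_def)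
  then have "(int a + XX j) mod int L = (int a' + XX j') mod int L" by (metis int_bb)
  then have "int L dvd ((int a + XX j) - (int a' + XX j'))" by (simp add: mod_eq_dvd_iff)
  then show ?thesis using same assms jk by blast
qed

lemma CC_nth: "j < nn \<Longrightarrow> CC a ! j = lift_edge z M L (eE j) (bb a j)"
  by (simp add: CC_def)
lemma CC_len: "length (CC a) = nn" by (simp add: CC_def)

lemma lift_inj: "lift_edge z M L e x = lift_edge z M L e' x' \<Longrightarrow> e = e' \<and> x = x'"
  by (cases e; cases e') (simp add: lift_edge_def)

lemma CC_distinct: assumes "a < nat gg" shows "distinct (CC a)"
proof -
  have "j = j'" if "j < nn" "j' < nn" "CC a ! j = CC a ! j'" for j j'
  proof -
    have "eE j = eE j'" "bb a j = bb a j'" using that lift_inj by (auto simp: CC_nth)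
    then have jk: "j mod k = j' mod k" using dist kpos by (simp add: eE_def nth_eq_iff_index_eq)
    have "(int a + XX j) mod int L = (int a + XX j') mod int L"
      using \<open>bb a j = bb a j'\<close> by (metis int_bb)
    then have "int L dvd ((int a + XX j) - (int a + XX j'))" by (simp add: mod_eq_dvd_iff)
    then show ?thesis using same assms that(1,2) jk by blast
  qed
  then show ?thesis by (auto simp: distinct_conv_nth CC_len)
qed

lemma CC_sub: "set (CC a) \<subseteq> Flift"
proof
  fix f assume "f \<in> set (CC a)"
  then obtain j where "j < nn" "f = lift_edge z M L (eE j) (bb a j)" by (auto simp: CC_def)
  moreover have "eE j \<in> set es" using kpos by (simp add: eE_def)
  ultimately show "f \<in> Flift" using bb_lt unfolding Flift_def by blast
qed

lemma ww_mod: "ww a ((j + 1) mod nn) = ww a (Suc j)" if "j < nn"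
proof (cases "Suc j < nn")
  case True then show ?thesis by simp
next
  case False
  then have "Suc j = 0 + nn" using that by simp
  then show ?thesis using ww_per[of a 0] by simp
qed

lemma CC_ends: "j < nn \<Longrightarrow> endpoints (CC a ! j) = {ww a j, ww a ((j + 1) mod nn)}"
  using ww_mod[of j a] by (simp add: CC_nth ww_step)

lemma CC_cycle: assumes "a < nat gg" "Flift \<subseteq> T" shows "is_cycle T (CC a)"
  unfolding is_cycle_def
proof (intro conjI)
  show "0 < length (CC a)" using nn_pos by (simp add: CC_len)
  show "distinct (CC a)" using CC_distinct assms(1) .
  show "set (CC a) \<subseteq> T" using CC_sub assms(2) by blast
  show "\<exists>vs. length vs = length (CC a) \<and> distinct vs \<and>
    (\<forall>i<length (CC a). endpoints (CC a ! i) = {vs ! i, vs ! ((i + 1) mod length (CC a))})"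
  proof (intro exI conjI allI impI)
    show "length (map (ww a) [0..<nn]) = length (CC a)" by (simp add: CC_len)
    show "distinct (map (ww a) [0..<nn])"
      using ww_inj assms(1) by (auto simp: distinct_conv_nth)
    fix i assume "i < length (CC a)"
    then show "endpoints (CC a ! i) = {map (ww a) [0..<nn] ! i, map (ww a) [0..<nn] ! ((i + 1) mod length (CC a))}"
      using nn_pos by (simp add: CC_len CC_ends)
  qed
qed

lemma CC_verts: "(\<Union>e\<in>set (CC a). endpoints e) \<subseteq> ww a ` {..<nn}"
proof
  fix v assume "v \<in> (\<Union>e\<in>set (CC a). endpoints e)"
  then obtain j where j: "j < nn" "v \<in> endpoints (CC a ! j)" by (auto simp: in_set_conv_nth CC_len)
  then show "v \<in> ww a ` {..<nn}" using CC_ends[OF j(1)] nn_pos by auto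
qed

lemma CC_disj: assumes "a < nat gg" "a' < nat gg" "a \<noteq> a'"
  shows "(\<Union>e\<in>set (CC a). endpoints e) \<inter> (\<Union>e\<in>set (CC a'). endpoints e) = {}"
  using CC_verts[of a] CC_verts[of a'] ww_inj[OF assms(1,2)] assms(3) by blast

lemma CC_union: "(\<Union>a<nat gg. set (CC a)) = Flift"
proof
  show "(\<Union>a<nat gg. set (CC a)) \<subseteq> Flift" using CC_sub by blast
  show "Flift \<subseteq> (\<Union>a<nat gg. set (CC a))"
  proof
    fix f assume "f \<in> Flift"
    then obtain e x where f: "f = lift_edge z M L e x" "e \<in> set es" "x < L" by (auto simp: Flift_def)
    then obtain i where i: "i < k" "e = es ! i" by (auto simp: in_set_conv_nth)
    obtain a j where aj: "a < nat gg" "j < nn" "j mod k = i" "bb a j = x" using surj[OF i(1) f(3)] by blast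
    have "CC a ! j = f" using aj f i by (simp add: CC_nth eE_def)
    then have "f \<in> set (CC a)" using aj(2) by (metis CC_len nth_mem)
    then show "f \<in> (\<Union>a<nat gg. set (CC a))" using aj(1) by blast
  qed
qed

end

theorem theorem2:
  fixes H :: "nat \<Rightarrow> nat \<Rightarrow> bool" and nr nc z d L2 :: nat
    and M :: "nat \<Rightarrow> nat \<Rightarrow> nat" and es :: "(nat \<times> nat) list"
  assumes "circulant_structured H nr nc z"
    and "1 \<le> d" and "d \<le> L2"
    and "md_mapping H nr nc z d M"
    and "is_cycle (tanner_edges H) es"
    and "\<forall>i<length es. if even i then fst (es ! i) = fst (es ! ((i + 1) mod length es))
                                   else snd (es ! i) = snd (es ! ((i + 1) mod length es))"
  shows "let k = length es;
             \<Delta> = (- (\<Sum>i<k. (-1) ^ (i + 1) * int (Medge z M (es ! i)))) mod int L2;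
             \<tau> = nat (gcd (int L2) \<Delta>);
             F = {lift_edge z M L2 e a | e a. e \<in> set es \<and> a < L2}
         in \<exists>Cs :: ((nat \<times> nat) \<times> (nat \<times> nat)) list list.
              length Cs = \<tau> \<and>
              (\<forall>C\<in>set Cs. is_cycle (tanner_edges (md_matrix H z M L2)) C \<and> set C \<subseteq> F
                          \<and> length C = L2 * k div \<tau>) \<and>
              (\<Union>C\<in>set Cs. set C) = F \<and>
              (\<forall>i<length Cs. \<forall>j<length Cs. i \<noteq> j \<longrightarrow>
                 (\<Union>e\<in>set (Cs ! i). endpoints e) \<inter> (\<Union>e\<in>set (Cs ! j). endpoints e) = {})"

proof -
  let ?k = "length es"
  have L1: "1 \<le> L2" using assms(2,3) by simp
  interpret LC es z M L2 "tanner_edges H"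
    by unfold_locales (rule L1, rule assms(5), rule assms(6))
  have Hes: "H (fst e) (snd e)" if "e \<in> set es" for e
    using assms(5) that by (auto simp: is_cycle_def tanner_edges_def)
  have FT: "Flift \<subseteq> tanner_edges (md_matrix H z M L2)"
  proof
    fix f assume "f \<in> Flift"
    then obtain e x where f: "f = lift_edge z M L2 e x" "e \<in> set es" "x < L2" by (auto simp: Flift_def)
    obtain r c where e: "e = (r, c)" by fastforce
    define m where "m = Medge z M (r, c)"
    have A: "int ((x + m) mod L2) mod int L2 = (int x + int m) mod int L2"
      by (simp only: of_nat_mod of_nat_add mod_mod_trivial)
    then have "int L2 dvd (int ((x + m) mod L2) - int x - int m)"
      by (simp only: mod_eq_dvd_iff diff_diff_eq)
    then have md: "(int ((x + m) mod L2) - int x) mod int L2 = int m mod int L2"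
      by (simp only: mod_eq_dvd_iff)
    have "H r c" using Hes[OF f(2)] e by simp
    moreover have "(x + m) mod L2 < L2" using L1 by simp
    ultimately show "f \<in> tanner_edges (md_matrix H z M L2)"
      unfolding f(1) e tanner_edges_def lift_edge_def md_matrix_def
      using md f(3) by (simp add: m_def)
  qed
  have sumeq: "- (\<Sum>i<?k. (-1) ^ (i + 1) * int (Medge z M (es ! i))) = PP"
  proof -
    have "- (\<Sum>i<?k. (-1) ^ (i + 1) * int (Medge z M (es ! i))) = (\<Sum>i<?k. (-1) ^ i * int (Medge z M (es ! i)))"
      by (simp add: sum_negf[symmetric])
    also have "\<dots> = PP" unfolding PP_def GG_def mm_def eE_def
      by (rule sum.cong) auto
    finally show ?thesis .
  qed
  have tau: "nat (gcd (int L2) ((- (\<Sum>i<?k. (-1) ^ (i + 1) * int (Medge z M (es ! i)))) mod int L2)) = nat gg"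
    unfolding sumeq gg_def using gcd_red_int[of PP "int L2"] by (simp add: gcd.commute)
  have nneq: "L2 * ?k div nat gg = nn"
  proof -
    have "int L2 = int (QQ * nat gg)" using QQ_gg gg_pos by simp
    then have "L2 = QQ * nat gg" by (simp only: of_nat_eq_iff)
    then have X: "L2 * ?k = (QQ * ?k) * nat gg" by (simp add: algebra_simps)
    have "nat gg \<noteq> 0" using gg_pos by simp
    then show ?thesis unfolding nn_def X by simp
  qed
  have Feq: "{lift_edge z M L2 e a | e a. e \<in> set es \<and> a < L2} = Flift" by (simp add: Flift_def)
  define Cs where "Cs = map CC [0..<nat gg]"
  have "length Cs = nat gg" by (simp add: Cs_def)
  moreover have "\<forall>C\<in>set Cs. is_cycle (tanner_edges (md_matrix H z M L2)) C \<and> set C \<subseteq> Flift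
                          \<and> length C = nn"
    using CC_cycle FT CC_sub CC_len by (auto simp: Cs_def)
  moreover have "(\<Union>C\<in>set Cs. set C) = Flift" using CC_union by (simp add: Cs_def atLeast0LessThan)
  moreover have "\<forall>i<length Cs. \<forall>j<length Cs. i \<noteq> j \<longrightarrow>
                 (\<Union>e\<in>set (Cs ! i). endpoints e) \<inter> (\<Union>e\<in>set (Cs ! j). endpoints e) = {}"
    using CC_disj by (simp add: Cs_def)
  ultimately show ?thesis unfolding Let_def tau nneq Feq by blast
qed

end
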